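(* Let $G_n(y)=\sum_{0\le k\le n}B(n,k)y^k$. Then $$\sum_{n\ge 0}G_n(y)\frac{x^n}{n!}=\frac{1}{\cos x-y\sin x}.$$ In particular $\sum_{k}B(n,k)$ equals the Springer number $S_n$, defined by $\sum_{n\ge0}S_n x^n/n!=1/(\cos x-\sin x)$.
   Context: A labeled ballot path is a lattice path from $(0,0)$ with steps $u=(1,1)$, $d=(1,-1)$ never going below the $x$-axis, each step carrying an integer label between $0$ and its height, where the height of a step is the smaller $y$-coordinate of its endpoints. $B(n,k)$ is the number of labeled ballot paths from $(0,0)$ ending at $(n,k)$. *)

theory Defs
  imports "HOL-Computational_Algebra.Formal_Power_Series"
begin

text \<open>A labeled ballot path is encoded as a list of steps; each step is a pair
(up, label) where up = True means u = (1,1) and up = False means d = (1,-1).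
lbp y ps e: starting at height y, the labeled path ps never goes below the
x-axis, every label lies between 0 and the height of its step (the smaller
y-coordinate of its endpoints), and the path ends at height e.\<close>

fun lbp :: "nat \<Rightarrow> (bool \<times> nat) list \<Rightarrow> nat \<Rightarrow> bool" where
  "lbp y [] e = (e = y)"
| "lbp y ((True, l) # ps) e = (l \<le> y \<and> lbp (y + 1) ps e)"
| "lbp y ((False, l) # ps) e = (0 < y \<and> l \<le> y - 1 \<and> lbp (y - 1) ps e)"

definition B :: "nat \<Rightarrow> nat \<Rightarrow> nat" where
  "B n k = card {ps. length ps = n \<and> lbp 0 ps k}"

definition G :: "nat \<Rightarrow> real \<Rightarrow> real" where
  "G n y = (\<Sum>k\<le>n. real (B n k) * y ^ k)"

definition springer :: "nat \<Rightarrow> real" where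
  "springer n = fact n * fps_nth (inverse (fps_cos (1::real) - fps_sin 1)) n"

end

theory Submission
  imports Defs
begin

unbundle fps_syntax

definition P :: "nat \<Rightarrow> nat \<Rightarrow> nat \<Rightarrow> (bool \<times> nat) list set" where
  "P n a k = {ps. length ps = n \<and> lbp a ps k}"

lemma P_0: "P 0 a k = (if k = a then {[]} else {})"
  by (auto simp: P_def)

lemma P_Suc: "P (Suc n) a k =
   (\<lambda>(l,ps). (True,l)#ps) ` ({..a} \<times> P n (Suc a) k) \<union>
   (\<lambda>(l,ps). (False,l)#ps) ` ({..<a} \<times> P n (a-1) k)"
proof (rule set_eqI)
  fix qs
  show "qs \<in> P (Suc n) a k \<longleftrightarrow> qs \<in> (\<lambda>(l,ps). (True,l)#ps) ` ({..a} \<times> P n (Suc a) k) \<union>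
   (\<lambda>(l,ps). (False,l)#ps) ` ({..<a} \<times> P n (a-1) k)"
  proof (cases qs)
    case Nil then show ?thesis by (auto simp: P_def)
  next
    case (Cons s ps)
    obtain b l where s: "s = (b,l)" by force
    show ?thesis
      by (cases b) (auto simp: P_def Cons s)
  qed
qed

lemma P_finite: "finite (P n a k)"
proof (induction n arbitrary: a)
  case 0 then show ?case by (simp add: P_0)
next
  case (Suc n) then show ?case by (simp add: P_Suc)
qed

lemma P_card_Suc: "card (P (Suc n) a k) = (a+1) * card (P n (Suc a) k) + a * card (P n (a-1) k)"
proof -
  have i1: "inj_on (\<lambda>(l,ps). (True,l)#ps) X" for X :: "(nat \<times> (bool \<times> nat) list) set"
    by (auto simp: inj_on_def)
  have i2: "inj_on (\<lambda>(l,ps). (False,l)#ps) X" for X :: "(nat \<times> (bool \<times> nat) list) set"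
    by (auto simp: inj_on_def)
  have "card (P (Suc n) a k) = card ((\<lambda>(l,ps). (True,l)#ps) ` ({..a} \<times> P n (Suc a) k))
      + card ((\<lambda>(l,ps). (False,l)#ps) ` ({..<a} \<times> P n (a-1) k))"
    unfolding P_Suc
    by (rule card_Un_disjoint) (auto simp: P_finite finite_cartesian_product)
  also have "\<dots> = (a+1) * card (P n (Suc a) k) + a * card (P n (a-1) k)"
    by (simp add: card_image[OF i1] card_image[OF i2] card_cartesian_product)
  finally show ?thesis .
qed

lemma lbp_bound: "lbp a ps k \<Longrightarrow> k \<le> a + length ps"
proof (induction ps arbitrary: a)
  case Nil then show ?case by simp
next
  case (Cons s ps)
  obtain b l where s: "s = (b,l)" by force
  show ?case using Cons by (cases b) (fastforce simp: s)+
qed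

lemma P_empty: "a + n < k \<Longrightarrow> P n a k = {}"
  using lbp_bound by (fastforce simp: P_def)

fun gp :: "nat \<Rightarrow> nat \<Rightarrow> real \<Rightarrow> real" where
  "gp 0 a y = y ^ a"
| "gp (Suc n) a y = real (a+1) * gp n (Suc a) y + real a * gp n (a - 1) y"

lemma gp_sum: "n + a \<le> m \<Longrightarrow> gp n a y = (\<Sum>k\<le>m. real (card (P n a k)) * y ^ k)"
proof (induction n arbitrary: a m)
  case 0
  have "(\<Sum>k\<le>m. real (card (P 0 a k)) * y ^ k) = (\<Sum>k\<le>m. if k = a then y ^ k else 0)"
    by (rule sum.cong) (auto simp: P_0)
  also have "\<dots> = y ^ a" using 0 by (simp add: sum.delta)
  finally show ?case by simp
next
  case (Suc n)
  have "(\<Sum>k\<le>m. real (card (P (Suc n) a k)) * y ^ k)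
     = real (a+1) * (\<Sum>k\<le>m. real (card (P n (Suc a) k)) * y ^ k)
       + real a * (\<Sum>k\<le>m. real (card (P n (a-1) k)) * y ^ k)"
    by (simp add: P_card_Suc sum_distrib_left sum.distrib algebra_simps)
  also have "\<dots> = gp (Suc n) a y"
    using Suc.IH[of "Suc a" m] Suc.IH[of "a-1" m] Suc.prems by simp
  finally show ?case by simp
qed

lemma G_gp: "G n y = gp n 0 y"
  unfolding G_def B_def using gp_sum[of n 0 n y] by (simp add: P_def)


lemma uniq:
  fixes F H :: "nat \<Rightarrow> real fps"
  assumes F0: "\<And>a. F a $ 0 = H a $ 0"
    and dF: "\<And>a. fps_deriv (F a) = fps_const (of_nat (a+1)) * F (Suc a) + fps_const (of_nat a) * F (a-1)"
    and dH: "\<And>a. fps_deriv (H a) = fps_const (of_nat (a+1)) * H (Suc a) + fps_const (of_nat a) * H (a-1)"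
  shows "F a = H a"
proof -
  have "\<forall>a. F a $ n = H a $ n" for n
  proof (induction n)
    case 0 then show ?case using F0 by simp
  next
    case (Suc n)
    show ?case
    proof
      fix a
      have "fps_deriv (F a) $ n = fps_deriv (H a) $ n"
        unfolding dF dH using Suc by simp
      then show "F a $ Suc n = H a $ Suc n"
        by (simp del: of_nat_Suc)
    qed
  qed
  then show ?thesis by (simp add: fps_ext)
qed

definition Dy :: "real \<Rightarrow> real fps" where
  "Dy y = fps_cos 1 - fps_const y * fps_sin 1"
definition Ty :: "real \<Rightarrow> real fps" where
  "Ty y = fps_sin 1 + fps_const y * fps_cos 1"
definition Ky :: "real \<Rightarrow> nat \<Rightarrow> real fps" where
  "Ky y a = Ty y ^ a * inverse (Dy y) ^ (a+1)"
definition Hy :: "real \<Rightarrow> nat \<Rightarrow> real fps" where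
  "Hy y a = Abs_fps (\<lambda>n. gp n a y / fact n)"

lemma Dy0: "Dy y $ 0 = 1" by (simp add: Dy_def)
lemma dDy: "fps_deriv (Dy y) = - Ty y"
  by (simp add: Dy_def Ty_def fps_sin_deriv fps_cos_deriv fps_const_neg[symmetric] del: fps_const_neg)
lemma dTy: "fps_deriv (Ty y) = Dy y"
  by (simp add: Dy_def Ty_def fps_sin_deriv fps_cos_deriv fps_const_neg[symmetric] del: fps_const_neg)
lemma DI: "Dy y * inverse (Dy y) = 1"
  using Dy0 by (simp add: inverse_mult_eq_1')
lemma dI: "fps_deriv (inverse (Dy y)) = Ty y * inverse (Dy y) ^ 2"
  using Dy0[of y] by (simp add: fps_inverse_deriv dDy)

lemma dKy: "fps_deriv (Ky y a) = fps_const (of_nat (a+1)) * Ky y (Suc a) + fps_const (of_nat a) * Ky y (a-1)"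
proof (cases a)
  case 0
  then show ?thesis by (simp add: Ky_def dI power2_eq_square)
next
  case (Suc b)
  let ?T = "Ty y" and ?I = "inverse (Dy y)" and ?D = "Dy y"
  have dT: "fps_deriv (?T ^ a) = of_nat a * ?D * ?T ^ b"
    using fps_deriv_power'[of ?T a] by (simp add: dTy Suc)
  have dII: "fps_deriv (?I ^ (a+1)) = of_nat (a+1) * (?T * ?I^2) * ?I ^ a"
    using fps_deriv_power'[of ?I "a+1"] by (simp add: dI)
  have e1: "of_nat a * ?D * ?T ^ b * ?I ^ (a+1) = of_nat a * (?T ^ b * ?I ^ a) * (?D * ?I)"
    by (simp add: mult_ac)
  have e2: "?T ^ a * (of_nat (a+1) * (?T * ?I^2) * ?I ^ a) = of_nat (a+1) * (?T ^ (a+1) * ?I ^ (a+2))"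
    by (simp add: mult_ac power2_eq_square)
  have "fps_deriv (Ky y a) = of_nat a * ?D * ?T ^ b * ?I ^ (a+1)
      + ?T ^ a * (of_nat (a+1) * (?T * ?I^2) * ?I ^ a)"
    unfolding Ky_def fps_deriv_mult dT dII by simp
  also have "\<dots> = of_nat a * (?T ^ b * ?I ^ a) + of_nat (a+1) * (?T ^ (a+1) * ?I ^ (a+2))"
    unfolding e1 e2 DI by simp
  also have "\<dots> = fps_const (of_nat (a+1)) * Ky y (Suc a) + fps_const (of_nat a) * Ky y (a-1)"
    by (simp add: Ky_def Suc fps_of_nat[symmetric] del: of_nat_Suc)
  finally show ?thesis .
qed

lemma dHy: "fps_deriv (Hy y a) = fps_const (of_nat (a+1)) * Hy y (Suc a) + fps_const (of_nat a) * Hy y (a-1)"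
proof (rule fps_ext)
  fix n
  have "fps_deriv (Hy y a) $ n = gp (Suc n) a y / fact n"
    by (simp add: Hy_def fps_deriv_def field_simps del: of_nat_Suc)
  then show "fps_deriv (Hy y a) $ n = (fps_const (of_nat (a+1)) * Hy y (Suc a) + fps_const (of_nat a) * Hy y (a-1)) $ n"
    by (simp add: Hy_def add_divide_distrib)
qed

lemma Hy_Ky: "Hy y a = Ky y a"
proof (rule uniq[where F="Hy y" and H="Ky y"])
  fix a
  have "Ty y $ 0 = y" by (simp add: Ty_def)
  then show "Hy y a $ 0 = Ky y a $ 0"
    using Dy0[of y] by (simp add: Hy_def Ky_def fps_nth_power_0)
qed (rule dHy, rule dKy)

theorem theorem4p4:
  shows "(\<forall>y::real. Abs_fps (\<lambda>n. G n y / fact n)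
            = inverse (fps_cos 1 - fps_const y * fps_sin 1))
         \<and> (\<forall>n. real (\<Sum>k\<le>n. B n k) = springer n)"
proof -
  have main: "Abs_fps (\<lambda>n. G n y / fact n) = inverse (fps_cos 1 - fps_const y * fps_sin 1)" for y
    using Hy_Ky[of y 0] by (simp add: Hy_def Ky_def G_gp Dy_def)
  moreover have "real (\<Sum>k\<le>n. B n k) = springer n" for n
  proof -
    have "real (\<Sum>k\<le>n. B n k) = G n 1" by (simp add: G_def)
    also have "\<dots> = fact n * (Abs_fps (\<lambda>n. G n 1 / fact n) $ n)" by simp
    also have "\<dots> = springer n" unfolding main springer_def by simp
    finally show ?thesis .
  qed
  ultimately show ?thesis by blast
qed

end
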